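(* Let $\sigma\in S_t$, $p\in S_k$ and $1\le s\le k$. (i) If for each $a\le s$ the word $p_ap_{a+1}\cdots p_{\min(a+t-1,k)}$ is not order-isomorphic to $\sigma_1\sigma_2\cdots\sigma_{\min(t,k-a+1)}$, then $\{1,2,\dots,s\}$ is reversibly deletable for $p$ with respect to $\{(\sigma,[t-1])\}$. (ii) If for each $a\le s$ the word $p_ap_{a+1}\cdots p_{\min(a+t-2,k)}$ is not order-isomorphic to $\sigma_1\sigma_2\cdots\sigma_{\min(t-1,k-a+1)}$, then $\{1,2,\dots,s\}$ is reversibly deletable for $p$ with respect to $\{(\sigma,[t-2])\}$.
   Context: Two words of distinct integers are order-isomorphic if they reduce to the same permutation. A vincular pattern $(\sigma,X)$, $\sigma\in S_\ell$, $X\subseteq[\ell-1]$, is contained in $\pi$ if some subsequence $\pi_{i_1}\cdots\pi_{i_\ell}$ ($i_1<\dots<i_\ell$) is order-isomorphic to $\sigma$ with $i_{x+1}=i_x+1$ for $x\in X$. For $p\in S_k$ and $w\in[n]^k$ with distinct letters order-isomorphic to $p$, $S_n^B(p;w)$ is the set of $B$-avoiding $\pi\in S_n$ with $\pi_i=w_i$ ($i\le k$). $d_R$ deletes entries in positions $R$ and reduces (for words: subtract from each remaining letter the number of deleted letters smaller than it). $R\subseteq[k]$ is reversibly deletable for $p$ w.r.t. $B$ if for every $n$ and $w$ with $S_n^B(p;w)\ne\emptyset$, $d_R$ is a bijection $S_n^B(p;w)\to S_{n-|R|}^B(d_R(p);d_R(w))$. *)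

theory Defs
  imports Main
begin

(* Words are lists of naturals; positions are 1-based in the paper, list indices are 0-based:
   the paper's u_i is  u ! (i - 1). *)

definition perms :: "nat \<Rightarrow> nat list set" where
  "perms n = {\<pi>. length \<pi> = n \<and> distinct \<pi> \<and> set \<pi> = {1..n}}"

definition order_iso :: "nat list \<Rightarrow> nat list \<Rightarrow> bool" where
  "order_iso u v \<longleftrightarrow> length u = length v \<and>
     (\<forall>i<length u. \<forall>j<length u. (u ! i < u ! j) = (v ! i < v ! j))"

(* vincular pattern (sigma, X), X a set of 1-based adjacency requirements:
   pi contains it iff there are positions i_1<...<i_l (here the 0-based list is)
   with pi_{i_1}...pi_{i_l} order-isomorphic to sigma and i_{x+1} = i_x + 1 for x in X *)
definition contains :: "nat list \<Rightarrow> nat list \<times> nat set \<Rightarrow> bool" where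
  "contains \<pi> P \<longleftrightarrow> (case P of (\<sigma>, X) \<Rightarrow>
     (\<exists>is. length is = length \<sigma> \<and> sorted_wrt (<) is \<and> (\<forall>i\<in>set is. i < length \<pi>) \<and>
        order_iso (map ((!) \<pi>) is) \<sigma> \<and>
        (\<forall>x\<in>X. is ! x = is ! (x - 1) + 1)))"

definition avoids :: "(nat list \<times> nat set) set \<Rightarrow> nat list \<Rightarrow> bool" where
  "avoids B \<pi> \<longleftrightarrow> (\<forall>P\<in>B. \<not> contains \<pi> P)"

definition Sset :: "nat \<Rightarrow> (nat list \<times> nat set) set \<Rightarrow> nat list \<Rightarrow> nat list set" where
  "Sset n B w = {\<pi> \<in> perms n. avoids B \<pi> \<and> (\<forall>i\<in>{1..length w}. \<pi> ! (i - 1) = w ! (i - 1))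
                     \<and> length w \<le> n}"

definition del :: "nat set \<Rightarrow> nat list \<Rightarrow> nat list" where
  "del R u = (let deleted = [u ! (i - 1). i \<leftarrow> [1..<length u + 1], i \<in> R];
                  kept = [u ! (i - 1). i \<leftarrow> [1..<length u + 1], i \<notin> R]
              in map (\<lambda>x. x - length (filter (\<lambda>y. y < x) deleted)) kept)"

definition rev_deletable :: "nat set \<Rightarrow> nat list \<Rightarrow> (nat list \<times> nat set) set \<Rightarrow> bool" where
  "rev_deletable R p B \<longleftrightarrow> R \<subseteq> {1..length p} \<and>
     (\<forall>n w. length w = length p \<and> set w \<subseteq> {1..n} \<and> distinct w \<and> order_iso w p \<and>
            Sset n B w \<noteq> {} \<longrightarrow>
            bij_betw (del R) (Sset n B w) (Sset (n - card R) B (del R w)))"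

end

theory Submission
  imports Defs
begin


definition cntF :: "nat list \<Rightarrow> nat \<Rightarrow> nat" where
  "cntF L x = x - length (filter (\<lambda>y. y < x) L)"

lemma lc1: "[u ! (i - 1). i \<leftarrow> map Suc xs, i \<in> {1..s}] = map ((!) u) (filter (\<lambda>i. i<s) xs)"
  by (induct xs) auto
lemma lc2: "[u ! (i - 1). i \<leftarrow> map Suc xs, i \<notin> {1..s}] = map ((!) u) (filter (\<lambda>i. \<not> i<s) xs)"
  by (induct xs) auto

lemma filt_take: "[u ! (i - 1). i \<leftarrow> [1..<length u + 1], i \<in> {1..s}] = take s u"
proof -
  have "[1..<length u + 1] = map Suc [0..<length u]" by (simp add: map_Suc_upt)
  hence "[u ! (i - 1). i \<leftarrow> [1..<length u + 1], i \<in> {1..s}] = map (\<lambda>i. u ! i) (filter (\<lambda>i. i < s) [0..<length u])"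
    by (simp only: lc1) 
  also have "filter (\<lambda>i. i < s) [0..<length u] = [0..<min s (length u)]"
    by (induct u rule: rev_induct) (auto simp: min_def not_less le_Suc_eq)
  also have "map (\<lambda>i. u ! i) [0..<min s (length u)] = take s u"
    by (rule nth_equalityI) auto
  finally show ?thesis .
qed

lemma filt_drop: "[u ! (i - 1). i \<leftarrow> [1..<length u + 1], i \<notin> {1..s}] = drop s u"
proof -
  have "[1..<length u + 1] = map Suc [0..<length u]" by (simp add: map_Suc_upt)
  hence "[u ! (i - 1). i \<leftarrow> [1..<length u + 1], i \<notin> {1..s}] = map (\<lambda>i. u ! i) (filter (\<lambda>i. \<not> i < s) [0..<length u])"
    by (simp only: lc2) 
  also have "filter (\<lambda>i. \<not> i < s) [0..<length u] = [s..<length u]"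
    by (induct u rule: rev_induct) auto
  also have "map (\<lambda>i. u ! i) [s..<length u] = drop s u"
    by (rule nth_equalityI) auto
  finally show ?thesis .
qed

lemma del_eq: "del {1..s} u = map (cntF (take s u)) (drop s u)"
  unfolding del_def Let_def filt_take filt_drop cntF_def ..



lemma cnt_card: "distinct L \<Longrightarrow> length (filter (\<lambda>y. y<x) L) = card {y\<in>set L. y<x}"
  by (simp add: distinct_length_filter Int_def conj_commute)

locale dl =
  fixes L :: "nat list" and n s :: nat
  assumes dist: "distinct L" and sub: "set L \<subseteq> {1..n}" and len: "length L = s"
begin

abbreviation "C \<equiv> {1..n} - set L"

lemma cnt_le: assumes "x \<in> C" shows "card {y\<in>set L. y<x} \<le> x - 1"
proof -
  have "{y\<in>set L. y<x} \<subseteq> {1..<x}" using sub by auto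
  hence "card {y\<in>set L. y<x} \<le> card {1..<x}" by (intro card_mono) auto
  thus ?thesis by simp
qed

lemma cnt_ge: assumes "x \<in> C" shows "s \<le> card {y\<in>set L. y<x} + (n - x)"
proof -
  have "set L = {y\<in>set L. y<x} \<union> {y\<in>set L. x<y}" using assms by (auto simp: not_less order_le_less)
  hence "card (set L) \<le> card {y\<in>set L. y<x} + card {y\<in>set L. x<y}"
    by (metis card_Un_le)
  moreover have "{y\<in>set L. x<y} \<subseteq> {x<..n}" using sub by auto
  hence "card {y\<in>set L. x<y} \<le> card {x<..n}" by (intro card_mono) auto
  moreover have "card (set L) = s" using dist len by (simp add: distinct_card)
  ultimately show ?thesis by simp
qed

lemma F_range: assumes "x \<in> C" shows "cntF L x \<in> {1..n-s}"
  using cnt_le[OF assms] cnt_ge[OF assms] assms unfolding cntF_def cnt_card[OF dist] by auto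

lemma F_mono: assumes "x \<in> C" "y \<in> C" "x < y" shows "cntF L x < cntF L y"
proof -
  have "{z\<in>set L. z<y} \<subseteq> {z\<in>set L. z<x} \<union> {x<..<y}" using assms by (auto simp: not_less order_le_less)
  hence "card {z\<in>set L. z<y} \<le> card ({z\<in>set L. z<x} \<union> {x<..<y})" by (intro card_mono) auto
  also have "\<dots> \<le> card {z\<in>set L. z<x} + card {x<..<y}" by (rule card_Un_le)
  finally have "card {z\<in>set L. z<y} \<le> card {z\<in>set L. z<x} + (y - x - 1)" by simp
  thus ?thesis using cnt_le[OF assms(1)] cnt_le[OF assms(2)] assms(3) unfolding cntF_def cnt_card[OF dist]
    by linarith
qed

lemma F_iff: assumes "x \<in> C" "y \<in> C" shows "(cntF L x < cntF L y) = (x < y)"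
  using F_mono[OF assms] F_mono[OF assms(2,1)] by (metis less_asym linorder_neqE_nat)

lemma F_inj: "inj_on (cntF L) C"
  by (metis F_iff inj_onI nat_neq_iff)

lemma F_bij: "bij_betw (cntF L) C {1..n-s}"
proof -
  have "card C = n - s" using sub dist len by (simp add: card_Diff_subset distinct_card)
  have "cntF L ` C = {1..n-s}"
  proof (rule card_subset_eq)
    show "cntF L ` C \<subseteq> {1..n-s}" using F_range by auto
    show "card (cntF L ` C) = card {1..n-s}" using \<open>card C = n - s\<close> card_image[OF F_inj] by simp
  qed simp
  thus ?thesis using F_inj by (simp add: bij_betw_def)
qed

end


lemma oi_sym: "order_iso u v \<Longrightarrow> order_iso v u"
  unfolding order_iso_def by auto

lemma oi_trans: "order_iso u v \<Longrightarrow> order_iso v w \<Longrightarrow> order_iso u w"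
  unfolding order_iso_def by auto

lemma oi_take: "order_iso u v \<Longrightarrow> order_iso (take l u) (take l v)"
  unfolding order_iso_def by auto

lemma oi_drop: "order_iso u v \<Longrightarrow> order_iso (drop l u) (drop l v)"
  unfolding order_iso_def by auto

lemma oi_map: "(\<And>x y. x \<in> set u \<Longrightarrow> y \<in> set u \<Longrightarrow> (f x < f y) = (x < y)) \<Longrightarrow> order_iso (map f u) u"
  unfolding order_iso_def by auto

lemma oi_refl: "order_iso u u"
  unfolding order_iso_def by auto

lemma occ_lift:
  assumes c: "contains (map F (drop s \<pi>)) (\<sigma>, X)"
    and X: "\<forall>x\<in>X. x < length \<sigma>"
    and F: "\<And>x y. x \<in> set (drop s \<pi>) \<Longrightarrow> y \<in> set (drop s \<pi>) \<Longrightarrow> (F x < F y) = (x < y)"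
  shows "contains \<pi> (\<sigma>, X)"
proof -
  obtain "is" where l: "length is = length \<sigma>" and so: "sorted_wrt (<) is"
    and b: "\<forall>i\<in>set is. i < length (map F (drop s \<pi>))"
    and o: "order_iso (map ((!) (map F (drop s \<pi>))) is) \<sigma>"
    and a: "\<forall>x\<in>X. is ! x = is ! (x - 1) + 1"
    using c unfolding contains_def by auto
  define js where "js = map (\<lambda>i. i + s) is"
  have e: "map ((!) (map F (drop s \<pi>))) is = map F (map ((!) \<pi>) js)"
    using b by (auto simp: js_def add.commute)
  have "order_iso (map F (map ((!) \<pi>) js)) (map ((!) \<pi>) js)"
  proof (rule oi_map)
    have "set (map ((!) \<pi>) js) \<subseteq> set (drop s \<pi>)"
    proof
      fix y assume "y \<in> set (map ((!) \<pi>) js)"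
      then obtain i where i: "i\<in>set is" "y = \<pi>!(i+s)" by (auto simp: js_def)
      hence "i < length (drop s \<pi>)" using b by simp
      hence "drop s \<pi> ! i \<in> set (drop s \<pi>)" by (rule nth_mem)
      moreover have "drop s \<pi> ! i = y" using i \<open>i < length (drop s \<pi>)\<close> by (simp add: add.commute)
      ultimately show "y \<in> set (drop s \<pi>)" by simp
    qed
    thus "\<And>x y. x \<in> set (map ((!) \<pi>) js) \<Longrightarrow> y \<in> set (map ((!) \<pi>) js) \<Longrightarrow> (F x < F y) = (x < y)"
      using F by blast
  qed
  hence o2: "order_iso (map ((!) \<pi>) js) \<sigma>" using o e by (metis oi_sym oi_trans)
  have "length js = length \<sigma> \<and> sorted_wrt (<) js \<and> (\<forall>i\<in>set js. i < length \<pi>) \<and>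
        order_iso (map ((!) \<pi>) js) \<sigma> \<and> (\<forall>x\<in>X. js ! x = js ! (x - 1) + 1)"
    using l so b o2 a X by (auto simp: js_def sorted_wrt_map)
  thus ?thesis unfolding contains_def prod.case by blast
qed



lemma consec:
  assumes a: "\<forall>x\<in>{1..m-1}. is ! x = is ! (x - 1) + (1::nat)"
  shows "j < m \<Longrightarrow> is ! j = is ! 0 + j"
proof (induct j)
  case 0 thus ?case by simp
next
  case (Suc j)
  hence "Suc j \<in> {1..m-1}" by auto
  with a have "is ! Suc j = is ! j + 1" by auto
  with Suc show ?case by simp
qed

lemma occ_down:
  assumes c: "contains \<pi> (\<sigma>, {1..m-1})"
    and m: "m \<le> length \<sigma>"
    and pre: "take k \<pi> = w" and lw: "length w = k"
    and wp: "order_iso w p"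
    and sk: "s \<le> k" and s1: "1 \<le> s"
    and hyp: "\<forall>a\<in>{1..s}. \<not> order_iso (take (min m (k-a+1)) (drop (a-1) p)) (take (min m (k-a+1)) \<sigma>)"
    and F: "\<And>x y. x \<in> set (drop s \<pi>) \<Longrightarrow> y \<in> set (drop s \<pi>) \<Longrightarrow> (F x < F y) = (x < y)"
  shows "contains (map F (drop s \<pi>)) (\<sigma>, {1..m-1})"
proof -
  obtain "is" where l: "length is = length \<sigma>" and so: "sorted_wrt (<) is"
    and b: "\<forall>i\<in>set is. i < length \<pi>"
    and o: "order_iso (map ((!) \<pi>) is) \<sigma>"
    and a: "\<forall>x\<in>{1..m-1}. is ! x = is ! (x - 1) + 1"
    using c unfolding contains_def by auto
  have kp: "k \<le> length \<pi>" using pre lw by auto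
  have "m \<noteq> 0"
  proof
    assume "m = 0"
    have "1 \<in> {1..s}" using s1 by simp
    with hyp have "\<not> order_iso (take (min m (k-1+1)) (drop (1-1) p)) (take (min m (k-1+1)) \<sigma>)" by blast
    with \<open>m = 0\<close> show False using oi_refl by simp
  qed
  hence ne: "is \<noteq> []" using m l by auto
  show ?thesis
  proof (cases "s \<le> is ! 0")
    case True
    have ge: "\<forall>i\<in>set is. s \<le> i"
    proof
      fix i assume "i \<in> set is"
      then obtain j where j: "j < length is" "i = is ! j" by (auto simp: in_set_conv_nth)
      show "s \<le> i"
      proof (cases j)
        case 0 thus ?thesis using j True by simp
      next
        case (Suc j') thus ?thesis using j True sorted_wrt_nth_less[OF so, of 0 j] by simp
      qed
    qed
    define js where "js = map (\<lambda>i. i - s) is"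
    have nn: "map F (drop s \<pi>) ! (x - s) = F (\<pi> ! x)" if "x \<in> set is" for x
    proof -
      have "x < length \<pi>" "s \<le> x" using b ge that by blast+
      hence "x - s < length (drop s \<pi>)" "s \<le> length \<pi>" by auto
      thus ?thesis using ge that by simp
    qed
    have e: "map ((!) (map F (drop s \<pi>))) js = map F (map ((!) \<pi>) is)"
      using nn by (auto simp: js_def)
    have sub: "set (map ((!) \<pi>) is) \<subseteq> set (drop s \<pi>)"
    proof
      fix y assume "y \<in> set (map ((!) \<pi>) is)"
      then obtain i where i: "i\<in>set is" "y = \<pi>!i" by auto
      hence "i < length \<pi>" "s \<le> i" using b ge by blast+
      hence "i - s < length (drop s \<pi>)" by auto
      hence "drop s \<pi> ! (i - s) \<in> set (drop s \<pi>)" by (rule nth_mem)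
      moreover have "drop s \<pi> ! (i - s) = y"
      proof -
        have "i < length \<pi>" "s \<le> i" using i b ge by blast+
        hence "s \<le> length \<pi>" "s \<le> i" by auto
        thus ?thesis using i by simp
      qed
      ultimately show "y \<in> set (drop s \<pi>)" by simp
    qed
    have "order_iso (map F (map ((!) \<pi>) is)) (map ((!) \<pi>) is)"
      by (rule oi_map) (use F sub in blast)
    hence o2: "order_iso (map ((!) (map F (drop s \<pi>))) js) \<sigma>" using o e by (metis oi_trans)
    have "length js = length \<sigma> \<and> sorted_wrt (<) js \<and> (\<forall>i\<in>set js. i < length (map F (drop s \<pi>))) \<and>
        order_iso (map ((!) (map F (drop s \<pi>))) js) \<sigma> \<and> (\<forall>x\<in>{1..m-1}. js ! x = js ! (x - 1) + 1)"
    proof (intro conjI)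
      show "length js = length \<sigma>" using l by (simp add: js_def)
      show "sorted_wrt (<) js" unfolding js_def sorted_wrt_map unfolding sorted_wrt_iff_nth_less
      proof (intro allI impI)
        fix i j assume ij: "i < j" "j < length is"
        hence "is ! i < is ! j" using sorted_wrt_nth_less[OF so] by blast
        moreover have "s \<le> is ! i" using ge ij by auto
        ultimately show "is ! i - s < is ! j - s" by simp
      qed
      show "\<forall>i\<in>set js. i < length (map F (drop s \<pi>))" using b ge proof (simp add: js_def, intro ballI) fix i assume "i \<in> set is" with b ge show "i - s < length \<pi> - s" by (meson diff_less_mono)  qed
      show "order_iso (map ((!) (map F (drop s \<pi>))) js) \<sigma>" by (rule o2)
      show "\<forall>x\<in>{1..m-1}. js ! x = js ! (x - 1) + 1"
      proof
        fix x assume x: "x \<in> {1..m-1}"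
        hence "x < length is" "x - 1 < length is" using m l by auto
        hence "is ! (x-1) \<in> set is" by auto
        hence "s \<le> is ! (x-1)" using ge by blast
        moreover have "js!x = is!x - s" "js!(x-1) = is!(x-1) - s"
          using \<open>x < length is\<close> \<open>x - 1 < length is\<close> by (simp_all add: js_def)
        moreover have "is!x = is!(x-1) + 1" using a x by blast
        ultimately show "js ! x = js ! (x - 1) + 1" by (simp add: Suc_diff_le)
      qed
    qed
    thus ?thesis unfolding contains_def prod.case by blast
  next
    case False
    define i0 where "i0 = is ! 0"
    define lL where "lL = min m (k - i0)"
    have i0s: "i0 < s" using False i0_def by simp
    have A: "i0 + 1 \<in> {1..s}" using i0s by simp
    have lL1: "min m (k - (i0+1) + 1) = lL" using i0s sk by (simp add: lL_def)
    have cons: "\<And>j. j < m \<Longrightarrow> is ! j = i0 + j" unfolding i0_def by (rule consec[OF a])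
    have eq: "take lL (drop i0 w) = take lL (map ((!) \<pi>) is)"
    proof (rule nth_equalityI)
      show "length (take lL (drop i0 w)) = length (take lL (map ((!) \<pi>) is))"
        using lw m l i0s sk by (simp add: lL_def)
      fix j assume "j < length (take lL (drop i0 w))"
      hence j: "j < lL" "i0 + j < k" using lw by (auto simp: lL_def)
      hence "j < m" by (simp add: lL_def)
      hence "j < length is" using m l by simp
      show "take lL (drop i0 w) ! j = take lL (map ((!) \<pi>) is) ! j"
      proof -
        have "take lL (drop i0 w) ! j = w ! (i0 + j)" using j lw by simp
        also have "\<dots> = \<pi> ! (i0 + j)" using j pre[symmetric] by simp
        also have "\<dots> = \<pi> ! (is ! j)" using cons[OF \<open>j < m\<close>] by simp
        also have "\<dots> = take lL (map ((!) \<pi>) is) ! j" using j \<open>j < length is\<close> by simp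
        finally show ?thesis .
      qed
    qed
    have o1: "order_iso (take lL (drop i0 p)) (take lL (drop i0 w))"
      by (rule oi_take, rule oi_drop, rule oi_sym, rule wp)
    have o3: "order_iso (take lL (drop i0 w)) (take lL \<sigma>)"
      unfolding eq by (rule oi_take, rule o)
    have "order_iso (take lL (drop i0 p)) (take lL \<sigma>)" using o1 o3 by (rule oi_trans)
    moreover have "\<not> order_iso (take (min m (k-(i0+1)+1)) (drop (i0+1-1) p)) (take (min m (k-(i0+1)+1)) \<sigma>)"
      using hyp A by blast
    ultimately show ?thesis unfolding lL1 by simp
  qed
qed



lemma prefix_iff: "length w \<le> length \<pi> \<Longrightarrow>
  (\<forall>i\<in>{1..length w}. \<pi> ! (i - 1) = w ! (i - 1)) = (take (length w) \<pi> = w)"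
proof
  assume le: "length w \<le> length \<pi>" and h: "\<forall>i\<in>{1..length w}. \<pi> ! (i - 1) = w ! (i - 1)"
  show "take (length w) \<pi> = w"
  proof (rule nth_equalityI)
    show "length (take (length w) \<pi>) = length w" using le by simp
    fix i assume "i < length (take (length w) \<pi>)"
    hence "i < length w" by simp
    hence "Suc i \<in> {1..length w}" by simp
    with h have "\<pi> ! i = w ! i" by fastforce
    thus "take (length w) \<pi> ! i = w ! i" using \<open>i < length w\<close> by simp
  qed
next
  assume "take (length w) \<pi> = w"
  hence "\<forall>i<length w. \<pi> ! i = w ! i" by (metis nth_take)
  thus "\<forall>i\<in>{1..length w}. \<pi> ! (i - 1) = w ! (i - 1)" by auto
qed

lemma Sset_iff: "\<pi> \<in> Sset n B w \<longleftrightarrow> \<pi> \<in> perms n \<and> avoids B \<pi> \<and> take (length w) \<pi> = w \<and> length w \<le> n"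
proof -
  have "\<pi> \<in> perms n \<Longrightarrow> length \<pi> = n" by (simp add: perms_def)
  thus ?thesis unfolding Sset_def using prefix_iff[of w \<pi>] by auto
qed

lemma core:
  fixes \<sigma> p :: "nat list" and t k s m :: nat
  assumes sig: "\<sigma> \<in> perms t" and lp: "length p = k" and s1: "1 \<le> s" and sk: "s \<le> k" and mt: "m \<le> t"
    and hyp: "\<forall>a\<in>{1..s}. \<not> order_iso (take (min m (k - a + 1)) (drop (a - 1) p)) (take (min m (k - a + 1)) \<sigma>)"
  shows "rev_deletable {1..s} p {(\<sigma>, {1..m-1})}"
  unfolding rev_deletable_def
proof (intro conjI allI impI)
  show "{1..s} \<subseteq> {1..length p}" using sk lp by auto
  fix n w
  assume "length w = length p \<and> set w \<subseteq> {1..n} \<and> distinct w \<and> order_iso w p \<and> Sset n {(\<sigma>, {1..m - 1})} w \<noteq> {}"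
  hence lw: "length w = k" and sw: "set w \<subseteq> {1..n}" and dw: "distinct w" and wp: "order_iso w p"
    using lp by auto
  define X where "X = {1..m-1}"
  define B where "B = {(\<sigma>, X)}"
  have ls: "length \<sigma> = t" using sig by (simp add: perms_def)
  have Xl: "\<forall>x\<in>X. x < length \<sigma>" using mt ls by (auto simp: X_def)
  have kn: "k \<le> n"
  proof -
    have "card (set w) \<le> card {1..n}" using sw by (intro card_mono) auto
    thus ?thesis using dw lw by (simp add: distinct_card)
  qed
  define L where "L = take s w"
  have dL: "distinct L" using dw by (simp add: L_def)
  have sL: "set L \<subseteq> {1..n}" using sw set_take_subset unfolding L_def by fast
  have lL: "length L = s" using lw sk by (simp add: L_def)
  interpret dl L n s using dL sL lL by unfold_locales
  define F where "F = cntF L"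
  have cardR: "card {1..s} = s" by simp
  have av: "avoids B \<pi> \<longleftrightarrow> \<not> contains \<pi> (\<sigma>, X)" for \<pi> by (simp add: avoids_def B_def)
  have dw_eq: "del {1..s} w = map F (drop s w)" unfolding F_def L_def by (rule del_eq)
  have ldw: "length (del {1..s} w) = k - s" using dw_eq lw by simp
  have sdw: "set (drop s w) \<subseteq> C"
  proof -
    have "set (drop s w) \<subseteq> set w" by (rule set_drop_subset)
    moreover have "set (take s w) \<inter> set (drop s w) = {}" using dw by (rule set_take_disj_set_drop_if_distinct) simp
    ultimately show ?thesis using sw by (auto simp: L_def)
  qed
  have P: "take s \<pi> = L \<and> set (drop s \<pi>) = C \<and> del {1..s} \<pi> = map F (drop s \<pi>) \<and>
           (\<forall>x\<in>set (drop s \<pi>). \<forall>y\<in>set (drop s \<pi>). (F x < F y) = (x < y))"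
    if pp: "\<pi> \<in> perms n" and tk: "take k \<pi> = w" for \<pi>
  proof -
    have P1: "take s \<pi> = L" using tk sk unfolding L_def by (metis min.absorb1 take_take)
    have dp: "distinct \<pi>" and sp: "set \<pi> = {1..n}" using pp by (auto simp: perms_def)
    have "set \<pi> = set (take s \<pi>) \<union> set (drop s \<pi>)" by (metis append_take_drop_id set_append)
    moreover have "set (take s \<pi>) \<inter> set (drop s \<pi>) = {}" using dp by (rule set_take_disj_set_drop_if_distinct) simp
    ultimately have P2: "set (drop s \<pi>) = C" using sp P1 by auto
    have P3: "del {1..s} \<pi> = map F (drop s \<pi>)" unfolding F_def P1[symmetric] by (rule del_eq)
    show ?thesis using P1 P2 P3 F_iff unfolding F_def by auto
  qed
  let ?S1 = "Sset n {(\<sigma>, {1..m - 1})} w"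
  let ?S2 = "Sset (n - card {1..s}) {(\<sigma>, {1..m - 1})} (del {1..s} w)"
  have S1: "\<pi> \<in> ?S1 \<longleftrightarrow> \<pi> \<in> perms n \<and> \<not> contains \<pi> (\<sigma>, X) \<and> take k \<pi> = w" for \<pi>
    using Sset_iff[of \<pi> n "{(\<sigma>, {1..m - 1})}" w] kn lw by (simp add: avoids_def X_def)
  have S2: "\<tau> \<in> ?S2 \<longleftrightarrow> \<tau> \<in> perms (n-s) \<and> \<not> contains \<tau> (\<sigma>, X) \<and> take (k-s) \<tau> = del {1..s} w" for \<tau>
    using Sset_iff[of \<tau> "n - card {1..s}" "{(\<sigma>, {1..m - 1})}" "del {1..s} w"] kn ldw sk diff_le_mono[OF kn, of s] by (simp add: avoids_def X_def)
  have into: "del {1..s} \<pi> \<in> ?S2" if "\<pi> \<in> ?S1" for \<pi>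
  proof -
    have pp: "\<pi> \<in> perms n" and nc: "\<not> contains \<pi> (\<sigma>, X)" and tk: "take k \<pi> = w" using that S1 by auto
    note PP = P[OF pp tk]
    have lp: "length \<pi> = n" using pp by (simp add: perms_def)
    have dp: "distinct \<pi>" using pp by (simp add: perms_def)
    have "del {1..s} \<pi> \<in> perms (n-s)"
    proof -
      have "length (map F (drop s \<pi>)) = n - s" using lp by simp
      moreover have "distinct (map F (drop s \<pi>))"
        using PP F_inj dp unfolding F_def by (simp add: distinct_map)
      moreover have "set (map F (drop s \<pi>)) = {1..n-s}"
        using PP F_bij unfolding F_def by (simp add: bij_betw_def)
      ultimately show ?thesis using PP by (simp add: perms_def)
    qed
    moreover have "\<not> contains (del {1..s} \<pi>) (\<sigma>, X)"
    proof
      assume "contains (del {1..s} \<pi>) (\<sigma>, X)"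
      hence "contains (map F (drop s \<pi>)) (\<sigma>, X)" using PP by simp
      hence "contains \<pi> (\<sigma>, X)" by (rule occ_lift[OF _ Xl]) (use PP in blast)
      with nc show False ..
    qed
    moreover have "take (k-s) (del {1..s} \<pi>) = del {1..s} w"
    proof -
      have "take (k-s) (map F (drop s \<pi>)) = map F (drop s (take (k - s + s) \<pi>))"
        by (simp add: take_map take_drop)
      also have "k - s + s = k" using sk by simp
      finally show ?thesis using PP tk dw_eq by simp
    qed
    ultimately show ?thesis using S2 by blast
  qed
  have inj: "inj_on (del {1..s}) ?S1"
  proof (rule inj_onI)
    fix \<pi>1 \<pi>2 assume a1: "\<pi>1 \<in> ?S1" and a2: "\<pi>2 \<in> ?S1" and e: "del {1..s} \<pi>1 = del {1..s} \<pi>2"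
    have p1: "\<pi>1 \<in> perms n" "take k \<pi>1 = w" using a1 S1 by auto
    have p2: "\<pi>2 \<in> perms n" "take k \<pi>2 = w" using a2 S1 by auto
    note Q1 = P[OF p1] and Q2 = P[OF p2]
    have "map F (drop s \<pi>1) = map F (drop s \<pi>2)" using e Q1 Q2 by simp
    moreover have "inj_on F (set (drop s \<pi>1) \<union> set (drop s \<pi>2))" using Q1 Q2 F_inj unfolding F_def by simp
    ultimately have "drop s \<pi>1 = drop s \<pi>2" using inj_on_map_eq_map by blast
    moreover have "take s \<pi>1 = take s \<pi>2" using Q1 Q2 by simp
    ultimately show "\<pi>1 = \<pi>2" by (metis append_take_drop_id)
  qed
  have surj: "\<tau> \<in> del {1..s} ` ?S1" if "\<tau> \<in> ?S2" for \<tau>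
  proof -
    have tp: "\<tau> \<in> perms (n-s)" and nc: "\<not> contains \<tau> (\<sigma>, X)" and tk: "take (k-s) \<tau> = del {1..s} w"
      using that S2 by auto
    have lt: "length \<tau> = n - s" and dt: "distinct \<tau>" and st: "set \<tau> = {1..n-s}" using tp by (auto simp: perms_def)
    define g where "g = inv_into C F"
    have Fb: "bij_betw F C {1..n-s}" using F_bij by (simp add: F_def)
    have gb: "bij_betw g {1..n-s} C" unfolding g_def by (rule bij_betw_inv_into[OF Fb])
    have Fg: "F (g y) = y" if "y \<in> {1..n-s}" for y
      using that Fb unfolding g_def by (metis bij_betw_inv_into_right)
    have gF: "g (F x) = x" if "x \<in> C" for x
      using that Fb unfolding g_def by (metis bij_betw_inv_into_left)
    define \<pi> where "\<pi> = L @ map g \<tau>"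
    have dpi: "drop s \<pi> = map g \<tau>" and tpi: "take s \<pi> = L" using lL by (simp_all add: \<pi>_def)
    have pp: "\<pi> \<in> perms n"
    proof -
      have "length \<pi> = n" using lL lt sk kn by (simp add: \<pi>_def)
      moreover have "set (map g \<tau>) = C" using st gb by (simp add: bij_betw_def)
      moreover have "distinct (map g \<tau>)" using dt gb st by (simp add: distinct_map bij_betw_def)
      ultimately show ?thesis using dL sL by (auto simp: perms_def \<pi>_def)
    qed
    have "map (F \<circ> g) \<tau> = \<tau>" by (rule map_idI) (use Fg st in auto)
    hence "map F (drop s \<pi>) = \<tau>" by (simp add: dpi)
    have tkp: "take k \<pi> = w"
    proof -
      have "drop s (take k \<pi>) = take (k - s) (drop s \<pi>)" using sk by (simp add: take_drop)
      also have "\<dots> = map g (take (k-s) \<tau>)" by (simp add: dpi take_map)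
      also have "\<dots> = map g (map F (drop s w))" using tk dw_eq by simp
      also have "\<dots> = drop s w"
      proof -
        have "map (g \<circ> F) (drop s w) = drop s w" by (rule map_idI) (use sdw gF in auto)
        thus ?thesis by simp
      qed
      finally have "drop s (take k \<pi>) = drop s w" .
      moreover have "take s (take k \<pi>) = take s w" using tpi sk by (simp add: L_def min_def)
      ultimately show ?thesis by (metis append_take_drop_id)
    qed
    note PP = P[OF pp tkp]
    have "\<not> contains \<pi> (\<sigma>, X)"
    proof
      assume "contains \<pi> (\<sigma>, X)"
      hence "contains (map F (drop s \<pi>)) (\<sigma>, X)" unfolding X_def
        by (rule occ_down[OF _ _ tkp lw wp sk s1 _]) (use mt ls lp hyp PP in auto)
      thus False using nc \<open>map F (drop s \<pi>) = \<tau>\<close> by simp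
    qed
    hence "\<pi> \<in> ?S1" using S1 pp tkp by blast
    moreover have "del {1..s} \<pi> = \<tau>" using PP \<open>map F (drop s \<pi>) = \<tau>\<close> by simp
    ultimately show ?thesis by blast
  qed
  show "bij_betw (del {1..s}) ?S1 ?S2"
    unfolding bij_betw_def using inj into surj by blast
qed


theorem mainTheorem11:
  fixes \<sigma> p :: "nat list" and t k s :: nat
  assumes "\<sigma> \<in> perms t" and "p \<in> perms k" and "1 \<le> s" and "s \<le> k"
  shows "((\<forall>a\<in>{1..s}. \<not> order_iso (take (min t (k - a + 1)) (drop (a - 1) p))
                                    (take (min t (k - a + 1)) \<sigma>))
           \<longrightarrow> rev_deletable {1..s} p {(\<sigma>, {1..t - 1})})
       \<and> ((\<forall>a\<in>{1..s}. \<not> order_iso (take (min (t - 1) (k - a + 1)) (drop (a - 1) p))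
                                    (take (min (t - 1) (k - a + 1)) \<sigma>))
           \<longrightarrow> rev_deletable {1..s} p {(\<sigma>, {1..t - 2})})"
proof (intro conjI impI)
  have lp: "length p = k" using assms(2) by (simp add: perms_def)
  show "rev_deletable {1..s} p {(\<sigma>, {1..t - 1})}"
    if "\<forall>a\<in>{1..s}. \<not> order_iso (take (min t (k - a + 1)) (drop (a - 1) p)) (take (min t (k - a + 1)) \<sigma>)"
    using core[OF assms(1) lp assms(3) assms(4) order_refl that] .
  show "rev_deletable {1..s} p {(\<sigma>, {1..t - 2})}"
    if "\<forall>a\<in>{1..s}. \<not> order_iso (take (min (t - 1) (k - a + 1)) (drop (a - 1) p)) (take (min (t - 1) (k - a + 1)) \<sigma>)"
  proof -
    have "rev_deletable {1..s} p {(\<sigma>, {1..t - 1 - 1})}"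
      using core[OF assms(1) lp assms(3) assms(4) diff_le_self that] .
    moreover have "t - 1 - 1 = t - 2" by simp
    ultimately show ?thesis by simp
  qed
qed

end
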